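(* Let $K\subseteq\mathbb{R}$ be compact. Then $C^1(K)=C^1(\mathbb{R}|K)$ if and only if $\sigma(\xi)<\infty$ for all $\xi\in K$.
   Context: $C^1(K)$ is the set of $f:K\to\mathbb{R}$ admitting a continuous $f':K\to\mathbb{R}$ with $\lim_{y\to x,\,y\in K\setminus\{x\}}\frac{f(y)-f(x)-f'(x)(y-x)}{|y-x|}=0$ for all $x\in K$; $C^1(\mathbb{R}|K)=\{g|_K: g\in C^1(\mathbb{R})\}$. A gap of $K$ is a bounded connected component of $\mathbb{R}\setminus K$ (a maximal bounded open interval in the complement); $\ell(G)$ denotes its length. For $\xi\in K$ and $\varepsilon>0$, $\sigma_\varepsilon(\xi)=\sup\left\{\frac{\sup\{|y-\xi|:y\in G\}}{\ell(G)}: G\subseteq(\xi-\varepsilon,\xi+\varepsilon) \text{ a gap of } K\right\}\in[0,\infty]$ with $\sup\emptyset=0$, and $\sigma(\xi)=\lim_{\varepsilon\to0}\sigma_\varepsilon(\xi)$. *)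

theory Defs
  imports "HOL-Analysis.Analysis"
begin

definition C1_on :: "real set \<Rightarrow> (real \<Rightarrow> real) set" where
  "C1_on K = {f. \<exists>f'. continuous_on K f' \<and>
      (\<forall>x\<in>K. ((\<lambda>y. (f y - f x - f' x * (y - x)) / \<bar>y - x\<bar>) \<longlongrightarrow> 0) (at x within K))}"

definition C1_real :: "(real \<Rightarrow> real) set" where
  "C1_real = {g. \<exists>g'. (\<forall>x. (g has_real_derivative g' x) (at x)) \<and> continuous_on UNIV g'}"

definition C1_restr :: "real set \<Rightarrow> (real \<Rightarrow> real) set" where
  "C1_restr K = {f. \<exists>g\<in>C1_real. \<forall>x\<in>K. f x = g x}"

definition gap :: "real set \<Rightarrow> real set \<Rightarrow> bool" where
  "gap K G \<longleftrightarrow> G \<in> components (- K) \<and> bounded G"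

definition gap_length :: "real set \<Rightarrow> real" where
  "gap_length G = Sup G - Inf G"

text \<open>sigma_eps K xi eps, with the convention that the supremum of the empty set is 0.\<close>
definition sigma_eps :: "real set \<Rightarrow> real \<Rightarrow> real \<Rightarrow> ereal" where
  "sigma_eps K \<xi> \<epsilon> = Sup (insert 0
     {ereal (Sup ((\<lambda>y. \<bar>y - \<xi>\<bar>) ` G) / gap_length G) | G.
        gap K G \<and> G \<subseteq> {\<xi> - \<epsilon> <..< \<xi> + \<epsilon>}})"

definition sigma :: "real set \<Rightarrow> real \<Rightarrow> ereal" where
  "sigma K \<xi> = Lim (at_right 0) (\<lambda>\<epsilon>. sigma_eps K \<xi> \<epsilon>)"

end

theory Submission
  imports Defs
begin


lemma sigma_eps_mono:
  assumes "e1 \<le> e2" shows "sigma_eps K \<xi> e1 \<le> sigma_eps K \<xi> e2"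
  unfolding sigma_eps_def
  by (rule Sup_subset_mono) (use assms in force)

lemma sigma_INF: "sigma K \<xi> = (INF e\<in>{0<..}. sigma_eps K \<xi> e)"
proof -
  let ?l = "INF e\<in>{0<..}. sigma_eps K \<xi> e"
  have "((\<lambda>e. sigma_eps K \<xi> e) \<longlongrightarrow> ?l) (at_right (0::real))"
  proof (rule decreasing_tendsto)
    show "\<forall>\<^sub>F n in at_right 0. ?l \<le> sigma_eps K \<xi> n"
      by (auto simp: eventually_at_right_less intro!: INF_lower eventually_mono[OF eventually_at_right_less])
  next
    fix x assume "?l < x"
    then obtain e0 where e0: "e0 > 0" "sigma_eps K \<xi> e0 < x" by (auto simp: INF_less_iff)
    show "\<forall>\<^sub>F n in at_right 0. sigma_eps K \<xi> n < x"
      unfolding eventually_at_right_field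
      using e0 by (intro exI[of _ e0]) (meson le_less_trans less_imp_le sigma_eps_mono)
  qed
  then show ?thesis unfolding sigma_def by (intro tendsto_Lim) auto
qed



lemma gap_of_endpoints:
  fixes K :: "real set"
  assumes "a < b" "a \<in> K" "b \<in> K" "{a<..<b} \<inter> K = {}"
  shows "gap K {a<..<b}"
  unfolding gap_def
proof
  show "{a<..<b} \<in> components (- K)"
    unfolding in_components_maximal
  proof (intro conjI allI impI)
    show "{a<..<b} \<noteq> {}" using assms by auto
    show "{a<..<b} \<subseteq> - K" using assms by auto
    show "connected {a<..<b}" by simp
    fix D :: "real set" assume D: "D \<noteq> {} \<and> {a<..<b} \<subseteq> D \<and> D \<subseteq> - K \<and> connected D"
    have "(a+b)/2 \<in> {a<..<b}" using assms by simp
    then have mid: "(a+b)/2 \<in> D" using D by blast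
    have "D \<subseteq> {a<..<b}"
    proof
      fix x assume x: "x \<in> D"
      show "x \<in> {a<..<b}"
      proof (rule ccontr)
        assume "x \<notin> {a<..<b}"
        then have "x \<le> a \<or> b \<le> x" by auto
        then show False
        proof
          assume "x \<le> a"
          moreover have "a \<le> (a+b)/2" using assms(1) by simp
          ultimately have "a \<in> D" using D x mid unfolding connected_iff_interval by blast
          then show False using D assms by auto
        next
          assume "b \<le> x"
          moreover have "(a+b)/2 \<le> b" using assms(1) by simp
          ultimately have "b \<in> D" using D x mid unfolding connected_iff_interval by blast
          then show False using D assms by auto
        qed
      qed
    qed
    then show "D = {a<..<b}" using D by auto
  qed
  show "bounded {a<..<b}" by simp
qed

lemma gap_endpoints:
  fixes K :: "real set"
  assumes "closed K" "gap K G"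
  shows "\<exists>a b. a < b \<and> a \<in> K \<and> b \<in> K \<and> G = {a<..<b}"
proof -
  have comp: "G \<in> components (- K)" and bd: "bounded G" using assms(2) by (auto simp: gap_def)
  have op: "open G" using comp assms(1) by (meson open_Compl open_components)
  have ne: "G \<noteq> {}" and sub: "G \<subseteq> -K" and con: "connected G"
    using comp unfolding in_components_maximal by blast+
  have maxall: "\<forall>D. D \<noteq> {} \<and> G \<subseteq> D \<and> D \<subseteq> -K \<and> connected D \<longrightarrow> D = G"
    using comp unfolding in_components_maximal by (elim conjE)
  have max: "\<And>D. D \<noteq> {} \<Longrightarrow> G \<subseteq> D \<Longrightarrow> D \<subseteq> -K \<Longrightarrow> connected D \<Longrightarrow> D = G"
    using maxall by blast
  have bdd: "bdd_below G" "bdd_above G" using bd by (auto simp: bounded_imp_bdd_below bounded_imp_bdd_above)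
  define a where "a = Inf G"
  define b where "b = Sup G"
  have inside: "a < x \<and> x < b" if xG: "x \<in> G" for x
  proof -
    obtain e where e: "e > 0" "ball x e \<subseteq> G" using openE[OF op xG] by blast
    have m1: "x - e/2 \<in> ball x e" "x + e/2 \<in> ball x e" using e(1) by (auto simp: dist_real_def)
    have m2: "x - e/2 \<in> G" using e(2) m1(1) by (rule subsetD)
    have m3: "x + e/2 \<in> G" using e(2) m1(2) by (rule subsetD)
    have "a \<le> x - e/2" unfolding a_def by (rule cInf_lower[OF m2 bdd(1)])
    moreover have "x + e/2 \<le> b" unfolding b_def by (rule cSup_upper[OF m3 bdd(2)])
    ultimately have "a \<le> x - e/2" "x + e/2 \<le> b" by auto
    then show ?thesis using e by auto
  qed
  have Gint: "G = {a<..<b}"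
  proof
    show "G \<subseteq> {a<..<b}" using inside by auto
    show "{a<..<b} \<subseteq> G"
    proof
      fix x assume x: "x \<in> {a<..<b}"
      have "Inf G < x" using x unfolding a_def by simp
      then obtain y where y: "y \<in> G" "y < x" using ne bdd(1) by (meson cInf_less_iff)
      have "x < Sup G" using x unfolding b_def by simp
      then obtain z where z: "z \<in> G" "x < z" using ne bdd(2) by (meson less_cSup_iff)
      show "x \<in> G" using con y z unfolding connected_iff_interval by (meson less_imp_le)
    qed
  qed
  obtain x0 where x0: "x0 \<in> G" using ne by blast
  have ab: "a < b" using inside[OF x0] by linarith
  have aK: "a \<in> K"
  proof (rule ccontr)
    assume "a \<notin> K"
    then obtain e where e: "e > 0" "ball a e \<subseteq> -K" using assms(1)
      by (metis ComplI closed_def open_contains_ball)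
    define D where "D = ball a e \<union> G"
    have "a + min e (b-a) / 2 \<in> ball a e" using e ab by (auto simp: dist_real_def)
    moreover have "a + min e (b-a) / 2 \<in> G" unfolding Gint using e ab by (auto simp: min_def field_simps)
    ultimately have "ball a e \<inter> G \<noteq> {}" by blast
    then have "connected D" unfolding D_def using con
      by (intro connected_Un connected_ball)
    moreover have "D \<noteq> {}" "G \<subseteq> D" "D \<subseteq> -K" unfolding D_def using e sub ne by auto
    ultimately have "D = G" using max by blast
    moreover have "a \<in> D" using e unfolding D_def by auto
    ultimately show False using inside by blast
  qed
  have bK: "b \<in> K"
  proof (rule ccontr)
    assume "b \<notin> K"
    then obtain e where e: "e > 0" "ball b e \<subseteq> -K" using assms(1)
      by (metis ComplI closed_def open_contains_ball)
    define D where "D = ball b e \<union> G"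
    have "b - min e (b-a) / 2 \<in> ball b e" using e ab by (auto simp: dist_real_def)
    moreover have "b - min e (b-a) / 2 \<in> G" unfolding Gint using e ab by (auto simp: min_def field_simps)
    ultimately have "ball b e \<inter> G \<noteq> {}" by blast
    then have "connected D" unfolding D_def using con
      by (intro connected_Un connected_ball)
    moreover have "D \<noteq> {}" "G \<subseteq> D" "D \<subseteq> -K" unfolding D_def using e sub ne by auto
    ultimately have "D = G" using max by blast
    moreover have "b \<in> D" using e unfolding D_def by auto
    ultimately show False using inside by blast
  qed
  show ?thesis using ab aK bK Gint by blast
qed
lemma gap_length_Ioo: "a < b \<Longrightarrow> gap_length {a<..<b} = b - a"
  by (simp add: gap_length_def)

lemma Sup_dist_Ioo:
  fixes a b \<xi> :: real
  assumes "a < b" "\<xi> \<notin> {a<..<b}"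
  shows "Sup ((\<lambda>y. \<bar>y - \<xi>\<bar>) ` {a<..<b}) = max \<bar>a - \<xi>\<bar> \<bar>b - \<xi>\<bar>"
proof (cases "\<xi> \<le> a")
  case True
  have "(\<lambda>y. \<bar>y - \<xi>\<bar>) ` {a<..<b} = {a-\<xi><..<b-\<xi>}"
  proof (intro set_eqI iffI)
    fix z assume "z \<in> {a-\<xi><..<b-\<xi>}" then show "z \<in> (\<lambda>y. \<bar>y - \<xi>\<bar>) ` {a<..<b}"
      using True by (intro image_eqI[of _ _ "z + \<xi>"]) auto
  qed (use True in auto)
  moreover have "max \<bar>a - \<xi>\<bar> \<bar>b - \<xi>\<bar> = b - \<xi>" using True assms by auto
  moreover have "a - \<xi> < b - \<xi>" using assms by simp
  ultimately show ?thesis by (simp only: cSup_greaterThanLessThan)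
next
  case False
  then have F: "b \<le> \<xi>" using assms by auto
  have "(\<lambda>y. \<bar>y - \<xi>\<bar>) ` {a<..<b} = {\<xi>-b<..<\<xi>-a}"
  proof (intro set_eqI iffI)
    fix z assume "z \<in> {\<xi>-b<..<\<xi>-a}" then show "z \<in> (\<lambda>y. \<bar>y - \<xi>\<bar>) ` {a<..<b}"
      using F by (intro image_eqI[of _ _ "\<xi> - z"]) auto
  qed (use F in auto)
  moreover have "max \<bar>a - \<xi>\<bar> \<bar>b - \<xi>\<bar> = \<xi> - a" using F assms by auto
  moreover have "\<xi> - b < \<xi> - a" using assms by simp
  ultimately show ?thesis by (simp only: cSup_greaterThanLessThan)
qed



lemma sigma_inf_gaps:
  fixes K :: "real set"
  assumes "closed K" "\<xi> \<in> K" "sigma K \<xi> = \<infinity>" "e > 0" "M \<ge> 0"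
  shows "\<exists>a b. a < b \<and> a \<in> K \<and> b \<in> K \<and> {a<..<b} \<inter> K = {} \<and> \<xi> - e \<le> a \<and> b \<le> \<xi> + e
     \<and> M * (b - a) < max \<bar>a - \<xi>\<bar> \<bar>b - \<xi>\<bar>"
proof -
  have "sigma K \<xi> \<le> sigma_eps K \<xi> e" unfolding sigma_INF using assms(4) by (intro INF_lower) auto
  then have "sigma_eps K \<xi> e = \<infinity>" using assms(3) by simp
  then have "ereal M < sigma_eps K \<xi> e" by simp
  then obtain x where x: "x \<in> insert 0 {ereal (Sup ((\<lambda>y. \<bar>y - \<xi>\<bar>) ` G) / gap_length G) | G.
        gap K G \<and> G \<subseteq> {\<xi> - e <..< \<xi> + e}}" "ereal M < x"
    using \<open>ereal M < sigma_eps K \<xi> e\<close> unfolding sigma_eps_def less_Sup_iff by blast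
  have "x \<noteq> 0" using x(2) assms(5) by (auto simp: zero_ereal_def)
  then obtain G where G: "gap K G" "G \<subseteq> {\<xi> - e <..< \<xi> + e}"
    "x = ereal (Sup ((\<lambda>y. \<bar>y - \<xi>\<bar>) ` G) / gap_length G)" using x(1) by auto
  obtain a b where ab: "a < b" "a \<in> K" "b \<in> K" "G = {a<..<b}" using gap_endpoints[OF assms(1) G(1)] by blast
  have disj: "{a<..<b} \<inter> K = {}" using G(1) ab(4) unfolding gap_def
    using in_components_subset by fastforce
  have xi: "\<xi> \<notin> {a<..<b}" using disj assms(2) by blast
  have "M < max \<bar>a - \<xi>\<bar> \<bar>b - \<xi>\<bar> / (b - a)"
    using x(2) G(3) ab(4) Sup_dist_Ioo[OF ab(1) xi] gap_length_Ioo[OF ab(1)] by simp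
  then have r: "M * (b - a) < max \<bar>a - \<xi>\<bar> \<bar>b - \<xi>\<bar>" using ab(1) by (simp add: field_simps)
  have l: "\<xi> - e \<le> a"
  proof (rule ccontr)
    assume "\<not> \<xi> - e \<le> a"
    then have "(a + min b (\<xi> - e))/2 \<in> G" "(a + min b (\<xi> - e))/2 \<le> \<xi> - e" using ab by (auto simp: min_def)
    then show False using G(2) by fastforce
  qed
  have u: "b \<le> \<xi> + e"
  proof (rule ccontr)
    assume "\<not> b \<le> \<xi> + e"
    then have "(b + max a (\<xi> + e))/2 \<in> G" "\<xi> + e \<le> (b + max a (\<xi> + e))/2" using ab by (auto simp: max_def)
    then show False using G(2) by fastforce
  qed
  show ?thesis using ab disj l u r by blast
qed



locale necs =
  fixes K :: "real set" and \<xi> :: real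
  assumes cK: "compact K" and xiK: "\<xi> \<in> K" and sinf: "sigma K \<xi> = \<infinity>"
begin

definition P :: "real \<Rightarrow> real \<Rightarrow> real \<Rightarrow> real \<Rightarrow> bool" where
  "P e M a b \<longleftrightarrow> a < b \<and> a \<in> K \<and> b \<in> K \<and> {a<..<b} \<inter> K = {} \<and> \<xi> - e \<le> a \<and> b \<le> \<xi> + e
     \<and> M * (b - a) < max \<bar>a - \<xi>\<bar> \<bar>b - \<xi>\<bar>"

definition pk :: "real \<Rightarrow> nat \<Rightarrow> real \<times> real" where
  "pk e n = (SOME p. P e (4^n) (fst p) (snd p))"

definition nr :: "real \<times> real \<Rightarrow> real" where
  "nr p = min \<bar>fst p - \<xi>\<bar> \<bar>snd p - \<xi>\<bar>"

definition E :: "nat \<Rightarrow> real" where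
  "E = rec_nat 1 (\<lambda>n e. min (nr (pk e n)) (e/2))"

lemma E_0: "E 0 = 1" and E_Suc: "E (Suc n) = min (nr (pk (E n) n)) (E n / 2)"
  by (simp_all add: E_def)

lemma pk_P: assumes "e > 0" shows "P e (4^n) (fst (pk e n)) (snd (pk e n))"
proof -
  have "\<exists>a b. P e (4^n) a b" unfolding P_def
    using sigma_inf_gaps[OF compact_imp_closed[OF cK] xiK sinf assms, of "4^n"] by simp
  then have "\<exists>p. P e (4^n) (fst p) (snd p)" by auto
  then show ?thesis unfolding pk_def by (rule someI_ex)
qed

lemma P_near_pos: assumes "P e M a b" "M \<ge> 1" shows "\<xi> < a \<or> b < \<xi>"
proof (rule ccontr)
  assume "\<not> (\<xi> < a \<or> b < \<xi>)"
  then have x: "a \<le> \<xi>" "\<xi> \<le> b" by auto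
  have h: "a < b" "M * (b - a) < max \<bar>a - \<xi>\<bar> \<bar>b - \<xi>\<bar>" using assms(1) unfolding P_def by blast+
  have "max \<bar>a - \<xi>\<bar> \<bar>b - \<xi>\<bar> \<le> b - a" using x by (simp add: abs_if)
  moreover have "1 * (b - a) \<le> M * (b - a)" by (rule mult_right_mono) (use assms(2) h(1) in auto)
  ultimately show False using h(2) by (simp add: max_def split: if_splits)
qed

lemma E_props: "E n > 0 \<and> P (E n) (4^n) (fst (pk (E n) n)) (snd (pk (E n) n))"
proof (induction n)
  case 0
  then show ?case using pk_P[of 1 0] by (simp add: E_0)
next
  case (Suc n)
  then have P: "P (E n) (4^n) (fst (pk (E n) n)) (snd (pk (E n) n))" by blast
  have "(1::real) \<le> 4^n" by simp
  from P_near_pos[OF P this] have "nr (pk (E n) n) > 0" unfolding nr_def using P unfolding P_def by auto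
  then have "E (Suc n) > 0" using Suc by (simp add: E_Suc)
  then show ?case using pk_P by blast
qed

definition a :: "nat \<Rightarrow> real" where "a n = fst (pk (E n) n)"
definition b :: "nat \<Rightarrow> real" where "b n = snd (pk (E n) n)"
definition far :: "nat \<Rightarrow> real" where "far n = max \<bar>a n - \<xi>\<bar> \<bar>b n - \<xi>\<bar>"
definition near :: "nat \<Rightarrow> real" where "near n = min \<bar>a n - \<xi>\<bar> \<bar>b n - \<xi>\<bar>"

lemma Pn: "P (E n) (4^n) (a n) (b n)" using E_props a_def b_def by simp
lemma Epos: "E n > 0" using E_props by simp

lemma ab: "a n < b n" "a n \<in> K" "b n \<in> K" "{a n<..<b n} \<inter> K = {}"
  "\<xi> - E n \<le> a n" "b n \<le> \<xi> + E n" "4^n * (b n - a n) < far n"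
  using Pn unfolding P_def far_def by auto

lemma side: "\<xi> < a n \<or> b n < \<xi>"
  using P_near_pos[OF Pn] by simp

lemma far_right: "\<xi> < a n \<Longrightarrow> far n = b n - \<xi> \<and> near n = a n - \<xi>"
  using ab(1)[of n] unfolding far_def near_def by auto
lemma far_left: "b n < \<xi> \<Longrightarrow> far n = \<xi> - a n \<and> near n = \<xi> - b n"
  using ab(1)[of n] unfolding far_def near_def by auto

lemma near_pos: "near n > 0" using side[of n] far_right[of n] far_left[of n] ab(1)[of n] by auto
lemma near_far: "near n < far n" using side[of n] far_right[of n] far_left[of n] ab(1)[of n] by auto
lemma far_E: "far n \<le> E n" using side[of n] far_right[of n] far_left[of n] ab(5,6)[of n] by auto

lemma E_Suc_le: "E (Suc n) \<le> near n" "E (Suc n) \<le> E n / 2"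
  unfolding E_Suc nr_def near_def a_def b_def by (rule min.cobounded1, rule min.cobounded2)

lemma E_dec: "m \<le> n \<Longrightarrow> E n \<le> E m"
proof -
  have "E (Suc k) \<le> E k" for k using E_Suc_le(2)[of k] Epos[of k] by linarith
  then have "decseq E" by (rule decseq_SucI)
  then show "m \<le> n \<Longrightarrow> E n \<le> E m" by (simp add: decseq_def)
qed

lemma E_le: "E n \<le> (1/2)^n"
proof (induction n)
  case 0 then show ?case by (simp add: E_0)
next
  case (Suc n) then show ?case using E_Suc_le(2)[of n] by simp
qed

lemma far_near_lt: "m < n \<Longrightarrow> far n \<le> near m"
  using far_E[of n] E_dec[of "Suc m" n] E_Suc_le(1)[of m] by simp

end


context necs begin

definition h :: "nat \<Rightarrow> real" where "h n = far n / 2^n"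
definition I :: "nat \<Rightarrow> real \<Rightarrow> real" where
  "I n y = (if \<xi> < a n then (if b n \<le> y then 1 else 0) else (if y \<le> a n then 1 else 0))"
definition fF :: "real \<Rightarrow> real" where "fF y = (\<Sum>n. h n * I n y)"

lemma far_le1: "far n \<le> 1" using far_E[of n] E_le[of n]
  by (smt (verit, best) le_divide_eq_1_pos power_le_one_iff zero_le_divide_1_iff)

lemma h_nonneg: "h n \<ge> 0" using near_pos[of n] near_far[of n] by (simp add: h_def)
lemma h_le: "h n \<le> (1/2)^n" using far_le1[of n] by (simp add: h_def power_one_over divide_right_mono)
lemma I_01: "I n y = 0 \<or> I n y = 1" by (simp add: I_def)
lemma I_nonneg: "I n y \<ge> 0" by (simp add: I_def)

lemma summ: "summable (\<lambda>n. h n * I n y)"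
proof (rule summable_comparison_test[of _ "\<lambda>n. (1/2::real)^n"])
  show "\<exists>N. \<forall>n\<ge>N. norm (h n * I n y) \<le> (1/2)^n"
  proof (intro exI[of _ 0] allI impI)
    fix n :: nat
    show "norm (h n * I n y) \<le> (1/2)^n" using h_le[of n] h_nonneg[of n] I_01[of n y] by auto
  qed
  show "summable (\<lambda>n. (1/2::real)^n)" by (simp add: summable_geometric)
qed

lemma I_far: "I n y = 1 \<Longrightarrow> far n \<le> \<bar>y - \<xi>\<bar>"
  using side[of n] far_right[of n] far_left[of n] unfolding I_def by (auto split: if_splits)

lemma I_near: "\<bar>y - \<xi>\<bar> \<le> near n \<Longrightarrow> I n y = 0"
  using side[of n] far_right[of n] far_left[of n] ab(1)[of n] unfolding I_def by (auto split: if_splits)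

lemma I_far_side: "far n \<le> \<bar>y - \<xi>\<bar> \<Longrightarrow> I n y = (if (\<xi> < a n) = (\<xi> < y) then 1 else 0)"
  using side[of n] far_right[of n] far_left[of n] ab(1)[of n] unfolding I_def by (auto split: if_splits)

lemma I_xi: "I n \<xi> = 0" using I_near[of \<xi> n] near_pos[of n] by simp

lemma fF_xi: "fF \<xi> = 0" by (simp add: fF_def I_xi)


lemma fF_bound:
  assumes "\<bar>y - \<xi>\<bar> < E n"
  shows "0 \<le> fF y \<and> fF y \<le> 2 * \<bar>y - \<xi>\<bar> * (1/2)^n"
proof -
  define c where "c = \<bar>y - \<xi>\<bar>"
  define w where "w m = (if m < n then 0 else c * (1/2::real)^m)" for m
  have tw: "h m * I m y \<le> w m" for m
  proof (cases "I m y = 1")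
    case True
    then have fc: "far m \<le> c" using I_far c_def by blast
    show ?thesis
    proof (cases "m < n")
      case True
      have "E n \<le> E (Suc m)" using E_dec[of "Suc m" n] True by simp
      then show ?thesis using fc assms E_Suc_le(1)[of m] near_far[of m] c_def by linarith
    next
      case False
      have "h m \<le> c / 2^m" unfolding h_def using fc by (simp add: divide_right_mono)
      then show ?thesis using False \<open>I m y = 1\<close> by (simp add: w_def power_one_over)
    qed
  next
    case False
    then have "I m y = 0" using I_01 by blast
    then show ?thesis by (simp add: w_def c_def)
  qed
  have eq: "(c * (1/2)^n) * (1 / (1 - 1/2)) = 2*c*(1/2::real)^n" by simp
  have "(\<lambda>i. (c * (1/2)^n) * (1/2::real)^i) sums ((c * (1/2)^n) * (1 / (1 - 1/2)))"
    by (intro sums_mult geometric_sums) simp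
  then have "(\<lambda>i. (c * (1/2)^n) * (1/2::real)^i) sums (2*c*(1/2::real)^n)" unfolding eq .
  moreover have "(\<lambda>i. w (i + n)) = (\<lambda>i. (c * (1/2)^n) * (1/2::real)^i)"
    by (auto simp: w_def power_add)
  ultimately have "(\<lambda>i. w (i + n)) sums (2 * c * (1/2)^n)" by simp
  then have ws: "w sums (2 * c * (1/2)^n)" unfolding sums_iff_shift by (simp add: w_def)
  have "fF y \<le> suminf w" unfolding fF_def using tw summ ws by (intro suminf_le) (auto simp: sums_iff)
  moreover have "0 \<le> fF y" unfolding fF_def using summ by (intro suminf_nonneg mult_nonneg_nonneg h_nonneg I_nonneg) auto
  ultimately show ?thesis using ws sums_unique c_def by fastforce
qed

lemma fF_deriv_xi:
  "((\<lambda>y. (fF y - fF \<xi> - 0 * (y - \<xi>)) / \<bar>y - \<xi>\<bar>) \<longlongrightarrow> 0) (at \<xi> within K)"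
  unfolding Lim_within
proof (intro allI impI)
  fix e :: real assume e: "e > 0"
  obtain n where n: "2 / e < 2^n" using real_arch_pow[of 2 "2/e"] by auto
  have "2 * (1/2)^n < e" using n e by (simp add: power_one_over field_simps)
  show "\<exists>d>0. \<forall>x\<in>K. 0 < dist x \<xi> \<and> dist x \<xi> < d \<longrightarrow> dist ((fF x - fF \<xi> - 0 * (x - \<xi>)) / \<bar>x - \<xi>\<bar>) 0 < e"
  proof (intro exI[of _ "E n"] conjI ballI impI)
    show "E n > 0" by (rule Epos)
    fix x assume "x \<in> K" "0 < dist x \<xi> \<and> dist x \<xi> < E n"
    then have x: "0 < \<bar>x - \<xi>\<bar>" "\<bar>x - \<xi>\<bar> < E n" by (auto simp: dist_real_def)
    from fF_bound[OF x(2)] have "\<bar>fF x\<bar> / \<bar>x - \<xi>\<bar> \<le> 2 * (1/2)^n" using x(1)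
      by (simp add: divide_le_eq mult_ac)
    then show "dist ((fF x - fF \<xi> - 0 * (x - \<xi>)) / \<bar>x - \<xi>\<bar>) 0 < e"
      using \<open>2 * (1/2)^n < e\<close> by (simp add: fF_xi dist_real_def)
  qed
qed

lemma gap_same:
  assumes "u \<in> K" "v \<in> K" "\<bar>u - v\<bar> < b m - a m"
  shows "I m u = I m v"
proof -
  have "u \<notin> {a m<..<b m}" "v \<notin> {a m<..<b m}" using ab(4)[of m] assms(1,2) by blast+
  then have "u \<le> a m \<or> b m \<le> u" "v \<le> a m \<or> b m \<le> v" by auto
  then show ?thesis using assms(3) unfolding I_def by auto
qed

lemma far_same:
  assumes "E n < r/2" "\<bar>x - \<xi>\<bar> = r" "\<bar>y - x\<bar> < r/2" "n \<le> m"
  shows "I m y = I m x"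
proof -
  have f: "far m < r/2" using far_E[of m] E_dec[OF assms(4)] assms(1) by linarith
  have "far m \<le> \<bar>y - \<xi>\<bar>" "far m \<le> \<bar>x - \<xi>\<bar>" "(\<xi> < y) = (\<xi> < x)" using f assms(2,3) by (auto simp: abs_if split: if_splits)
  then show ?thesis using I_far_side by presburger
qed

lemma fF_loc_const:
  assumes "x \<in> K" "x \<noteq> \<xi>"
  shows "eventually (\<lambda>y. fF y = fF x) (at x within K)"
proof -
  define r where "r = \<bar>x - \<xi>\<bar>"
  have r: "r > 0" using assms(2) r_def by simp
  obtain n where n: "2 / r < 2^n" using real_arch_pow[of 2 "2/r"] by auto
  have "(1/2)^n < r/2" using n r by (simp add: power_one_over field_simps)
  then have En: "E n < r/2" using E_le[of n] by linarith
  have ev1: "eventually (\<lambda>y. \<bar>y - x\<bar> < r/2) (at x within K)"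
    unfolding eventually_at using r by (intro exI[of _ "r/2"]) (auto simp: dist_real_def)
  have "\<forall>m\<in>{..<n}. eventually (\<lambda>y. I m y = I m x) (at x within K)"
  proof
    fix m assume "m \<in> {..<n}"
    show "eventually (\<lambda>y. I m y = I m x) (at x within K)"
      unfolding eventually_at using ab(1)[of m] assms(1)
      by (intro exI[of _ "b m - a m"]) (auto simp: dist_real_def intro: gap_same)
  qed
  then have ev2: "eventually (\<lambda>y. \<forall>m\<in>{..<n}. I m y = I m x) (at x within K)"
    by (rule eventually_ball_finite[rotated]) simp
  show ?thesis
  proof (rule eventually_mono[OF eventually_conj[OF ev1 ev2]])
    fix y assume y: "\<bar>y - x\<bar> < r/2 \<and> (\<forall>m\<in>{..<n}. I m y = I m x)"
    have "I m y = I m x" for m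
    proof (cases "m < n")
      case True then show ?thesis using y by auto
    next
      case False then show ?thesis using far_same[OF En r_def[symmetric]] y by auto
    qed
    then show "fF y = fF x" unfolding fF_def by simp
  qed
qed

lemma fF_C1: "fF \<in> C1_on K"
  unfolding C1_on_def
proof (intro CollectI exI[of _ "\<lambda>_. 0"] conjI ballI)
  show "continuous_on K (\<lambda>_. 0::real)" by simp
  fix x assume x: "x \<in> K"
  show "((\<lambda>y. (fF y - fF x - 0 * (y - x)) / \<bar>y - x\<bar>) \<longlongrightarrow> 0) (at x within K)"
  proof (cases "x = \<xi>")
    case True then show ?thesis using fF_deriv_xi by simp
  next
    case False
    show ?thesis
      by (rule tendsto_eventually, rule eventually_mono[OF fF_loc_const[OF x False]]) simp
  qed
qed

end

context necs begin

lemma I_other: assumes "m \<noteq> n" shows "I m (b n) = I m (a n)"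
proof (cases "m < n")
  case True
  have "far n \<le> near m" using far_near_lt[OF True] .
  moreover have "\<bar>a n - \<xi>\<bar> \<le> far n" "\<bar>b n - \<xi>\<bar> \<le> far n" unfolding far_def by auto
  ultimately show ?thesis using I_near by (metis order.trans)
next
  case False
  then have mn: "n < m" using assms by simp
  have "far m \<le> near n" using far_near_lt[OF mn] .
  moreover have "near n \<le> \<bar>a n - \<xi>\<bar>" "near n \<le> \<bar>b n - \<xi>\<bar>" unfolding near_def by auto
  moreover have "(\<xi> < a n) = (\<xi> < b n)" using side[of n] ab(1)[of n] by auto
  ultimately show ?thesis using I_far_side[of m "a n"] I_far_side[of m "b n"] by simp
qed

lemma I_self: "I n (b n) - I n (a n) = (if \<xi> < a n then 1 else -1)"
  using side[of n] ab(1)[of n] unfolding I_def by auto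

lemma jump: "fF (b n) - fF (a n) = (if \<xi> < a n then h n else - h n)"
proof -
  have "fF (b n) - fF (a n) = (\<Sum>m. h m * I m (b n) - h m * I m (a n))"
    unfolding fF_def by (rule suminf_diff[OF summ summ])
  also have "(\<lambda>m. h m * I m (b n) - h m * I m (a n)) = (\<lambda>m. if m = n then h n * (I n (b n) - I n (a n)) else 0)"
    using I_other by (auto simp: right_diff_distrib)
  also have "(\<Sum>m. if m = n then h n * (I n (b n) - I n (a n)) else 0) = h n * (I n (b n) - I n (a n))"
    using sums_single[of n "\<lambda>_. h n * (I n (b n) - I n (a n))"] by (simp add: sums_iff)
  finally show ?thesis using I_self[of n] by simp
qed

lemma not_restr: "fF \<notin> C1_restr K"
proof
  assume "fF \<in> C1_restr K"
  then obtain g g' where g: "\<And>x. (g has_real_derivative g' x) (at x)" "continuous_on UNIV g'"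
    "\<And>x. x \<in> K \<Longrightarrow> fF x = g x"
    unfolding C1_restr_def C1_real_def by blast
  have "isCont g' \<xi>" using g(2) by (simp add: continuous_on_eq_continuous_at)
  then obtain d where d: "d > 0" "\<And>t. \<bar>t - \<xi>\<bar> < d \<Longrightarrow> \<bar>g' t - g' \<xi>\<bar> < 1"
    unfolding continuous_at_eps_delta dist_real_def by (meson zero_less_one)
  define B where "B = \<bar>g' \<xi>\<bar> + 1"
  obtain n1 where n1: "1 / d < 2^n1" using real_arch_pow[of 2 "1/d"] by auto
  obtain n2 where n2: "B < 2^n2" using real_arch_pow[of 2 B] by auto
  define n where "n = max n1 n2"
  have "(1/2::real)^n \<le> (1/2)^n1" unfolding n_def by (simp add: power_decreasing)
  moreover have "(1/2::real)^n1 < d" using n1 d(1) by (simp add: power_one_over field_simps)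
  ultimately have En: "E n < d" using E_le[of n] by linarith
  have "(2::real)^n2 \<le> 2^n" unfolding n_def by (rule power_increasing) auto
  then have Bn: "B < 2^n" using n2 by linarith
  have der: "\<And>x. a n \<le> x \<Longrightarrow> x \<le> b n \<Longrightarrow> (g has_real_derivative g' x) (at x)" using g(1) by blast
  obtain z where z: "a n < z" "z < b n" "g (b n) - g (a n) = (b n - a n) * g' z"
    using MVT2[OF ab(1)[of n] der] by blast
  have "\<bar>z - \<xi>\<bar> \<le> far n" using z unfolding far_def by auto
  then have "\<bar>z - \<xi>\<bar> < d" using far_E[of n] En by linarith
  then have gz: "\<bar>g' z\<bar> < B" using d(2) unfolding B_def by fastforce
  have "h n = \<bar>fF (b n) - fF (a n)\<bar>" using jump[of n] h_nonneg[of n] by auto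
  also have "\<dots> = (b n - a n) * \<bar>g' z\<bar>" using z(3) g(3) ab(1,2,3)[of n] by (simp add: abs_mult)
  also have "\<dots> \<le> (b n - a n) * B" using gz ab(1)[of n] by simp
  finally have "far n \<le> 2^n * (b n - a n) * B" unfolding h_def by (simp add: field_simps)
  also have "\<dots> < 2^n * (b n - a n) * 2^n" using Bn ab(1)[of n] by simp
  also have "\<dots> = 4^n * (b n - a n)" by (simp add: power_mult_distrib[symmetric])
  finally show False using ab(7)[of n] by simp
qed

end

lemma necessity:
  fixes K :: "real set"
  assumes "compact K" "\<xi> \<in> K" "sigma K \<xi> = \<infinity>"
  shows "C1_on K \<noteq> C1_restr K"
proof -
  interpret necs K \<xi> using assms by unfold_locales
  show ?thesis using fF_C1 not_restr by blast
qed



lemma sigma_fin_bound: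
  fixes K :: "real set"
  assumes "sigma K \<xi> < \<infinity>" "\<xi> \<in> K"
  shows "\<exists>e>0. \<exists>C>0. \<forall>a b. a < b \<and> a \<in> K \<and> b \<in> K \<and> {a<..<b} \<inter> K = {} \<and> \<xi> - e \<le> a \<and> b \<le> \<xi> + e
     \<longrightarrow> max \<bar>a - \<xi>\<bar> \<bar>b - \<xi>\<bar> \<le> C * (b - a)"
proof -
  have "(INF e\<in>{0<..}. sigma_eps K \<xi> e) < \<infinity>" using assms(1) sigma_INF by metis
  then obtain e where e: "e > 0" "sigma_eps K \<xi> e < \<infinity>" unfolding INF_less_iff by auto
  define S where "S = sigma_eps K \<xi> e"
  have S0: "0 \<le> S" unfolding S_def sigma_eps_def by (rule Sup_upper) simp
  have "S \<noteq> \<infinity>" "S \<noteq> -\<infinity>" using S0 e(2) S_def by auto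
  then obtain s where s: "S = ereal s" by (cases S) auto
  have s1: "s + 1 > 0" using S0 s by simp
  have key: "max \<bar>a - \<xi>\<bar> \<bar>b - \<xi>\<bar> \<le> (s + 1) * (b - a)"
    if h: "a < b \<and> a \<in> K \<and> b \<in> K \<and> {a<..<b} \<inter> K = {} \<and> \<xi> - e \<le> a \<and> b \<le> \<xi> + e" for a b
  proof -
    from h have gp: "gap K {a<..<b}" by (intro gap_of_endpoints) auto
    have sub: "{a<..<b} \<subseteq> {\<xi> - e<..<\<xi> + e}" using h by auto
    have "ereal (Sup ((\<lambda>y. \<bar>y - \<xi>\<bar>) ` {a<..<b}) / gap_length {a<..<b}) \<le> S"
      unfolding S_def sigma_eps_def using gp sub by (intro Sup_upper) blast
    moreover have "\<xi> \<notin> {a<..<b}" using h assms(2) by blast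
    ultimately have "max \<bar>a - \<xi>\<bar> \<bar>b - \<xi>\<bar> / (b - a) \<le> s"
      using s h Sup_dist_Ioo[of a b \<xi>] gap_length_Ioo[of a b] by simp
    then have "max \<bar>a - \<xi>\<bar> \<bar>b - \<xi>\<bar> \<le> s * (b - a)" using h by (simp add: divide_le_eq)
    then show "max \<bar>a - \<xi>\<bar> \<bar>b - \<xi>\<bar> \<le> (s + 1) * (b - a)" using h by (simp add: algebra_simps)
  qed
  show ?thesis using key e(1) s1 by blast
qed



locale sufs =
  fixes K :: "real set" and f D :: "real \<Rightarrow> real"
  assumes cK: "compact K" and neK: "K \<noteq> {}" and cD: "continuous_on K D"
    and lim: "\<And>x. x \<in> K \<Longrightarrow> ((\<lambda>y. (f y - f x - D x * (y - x)) / \<bar>y - x\<bar>) \<longlongrightarrow> 0) (at x within K)"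
    and sfin: "\<And>\<xi>. \<xi> \<in> K \<Longrightarrow> sigma K \<xi> < \<infinity>"
begin

lemma clK: "closed K" using cK by (rule compact_imp_closed)
lemma bdK: "bounded K" using cK by (rule compact_imp_bounded)

definition mK where "mK = Inf K"
definition MK where "MK = Sup K"

lemma mK: "mK \<in> K" "\<And>k. k \<in> K \<Longrightarrow> mK \<le> k"
  unfolding mK_def using clK neK bdK
  by (auto intro: closed_contains_Inf cInf_lower bounded_imp_bdd_below)
lemma MK: "MK \<in> K" "\<And>k. k \<in> K \<Longrightarrow> k \<le> MK"
  unfolding MK_def using clK neK bdK
  by (auto intro: closed_contains_Sup cSup_upper bounded_imp_bdd_above)

lemma lim_eps:
  assumes "x \<in> K" "e > 0"
  shows "\<exists>d>0. \<forall>y\<in>K. \<bar>y - x\<bar> < d \<longrightarrow> \<bar>f y - f x - D x * (y - x)\<bar> \<le> e * \<bar>y - x\<bar>"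
proof -
  obtain d where d: "d > 0" "\<And>y. y \<in> K \<Longrightarrow> 0 < dist y x \<Longrightarrow> dist y x < d \<Longrightarrow>
      dist ((f y - f x - D x * (y - x)) / \<bar>y - x\<bar>) 0 < e"
    using lim[OF assms(1)] assms(2) unfolding Lim_within by meson
  show ?thesis
  proof (intro exI[of _ d] conjI ballI impI d(1))
    fix y assume y: "y \<in> K" "\<bar>y - x\<bar> < d"
    show "\<bar>f y - f x - D x * (y - x)\<bar> \<le> e * \<bar>y - x\<bar>"
    proof (cases "y = x")
      case False
      then have "\<bar>f y - f x - D x * (y - x)\<bar> / \<bar>y - x\<bar> < e"
        using d(2)[OF y(1)] y(2) by (auto simp: dist_real_def)
      then show ?thesis using False by (simp add: divide_less_eq less_imp_le)
    qed simp
  qed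
qed

lemma cf: "continuous_on K f"
  unfolding continuous_on_def
proof
  fix x assume x: "x \<in> K"
  have t: "((\<lambda>y. f x + D x * (y - x) + \<bar>y - x\<bar> * ((f y - f x - D x * (y - x)) / \<bar>y - x\<bar>)) \<longlongrightarrow>
      f x + D x * (x - x) + \<bar>x - x\<bar> * 0) (at x within K)"
    by (intro tendsto_intros lim[OF x])
  show "(f \<longlongrightarrow> f x) (at x within K)"
  proof (rule Lim_transform_within[OF _ zero_less_one])
    show "((\<lambda>y. f x + D x * (y - x) + \<bar>y - x\<bar> * ((f y - f x - D x * (y - x)) / \<bar>y - x\<bar>)) \<longlongrightarrow> f x) (at x within K)"
      using t by simp
    fix y assume "y \<in> K" "0 < dist y x" "dist y x < 1"
    then show "f x + D x * (y - x) + \<bar>y - x\<bar> * ((f y - f x - D x * (y - x)) / \<bar>y - x\<bar>) = f y"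
      by (simp add: dist_real_def)
  qed
qed

lemma bounds: "\<exists>B>0. \<forall>k\<in>K. \<bar>D k\<bar> \<le> B \<and> \<bar>f k\<bar> \<le> B"
proof -
  obtain B1 where B1: "B1 > 0" "\<forall>y\<in>D ` K. norm y \<le> B1"
    using compact_imp_bounded[OF compact_continuous_image[OF cD cK]] unfolding bounded_pos by blast
  obtain B2 where B2: "B2 > 0" "\<forall>y\<in>f ` K. norm y \<le> B2"
    using compact_imp_bounded[OF compact_continuous_image[OF cf cK]] unfolding bounded_pos by blast
  show ?thesis using B1 B2 by (intro exI[of _ "B1 + B2"]) auto
qed

definition L where "L t = Sup (K \<inter> {..t})"
definition R where "R t = Inf (K \<inter> {t..})"

lemma LR_gap:
  assumes "a \<in> K" "b \<in> K" "a < t" "t < b" "{a<..<b} \<inter> K = {}"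
  shows "L t = a" "R t = b"
proof -
  have A: "\<forall>k\<in>K \<inter> {..t}. k \<le> a"
  proof
    fix k assume k: "k \<in> K \<inter> {..t}"
    show "k \<le> a"
    proof (rule ccontr)
      assume "\<not> k \<le> a"
      then have "k \<in> {a<..<b}" using k assms by auto
      then show False using assms k by blast
    qed
  qed
  show "L t = a" unfolding L_def
    by (rule cSup_eq_maximum) (use assms A in auto)
  have B: "\<forall>k\<in>K \<inter> {t..}. b \<le> k"
  proof
    fix k assume k: "k \<in> K \<inter> {t..}"
    show "b \<le> k"
    proof (rule ccontr)
      assume "\<not> b \<le> k"
      then have "k \<in> {a<..<b}" using k assms by auto
      then show False using assms k by blast
    qed
  qed
  show "R t = b" unfolding R_def
    by (rule cInf_eq_minimum) (use assms B in auto)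
qed

lemma L_props:
  assumes "mK \<le> t"
  shows "L t \<in> K" "L t \<le> t" "\<And>k. k \<in> K \<Longrightarrow> k \<le> t \<Longrightarrow> k \<le> L t"
proof -
  have ne: "K \<inter> {..t} \<noteq> {}" using mK assms by auto
  have cl: "closed (K \<inter> {..t})" using clK by (intro closed_Int) auto
  have bd: "bdd_above (K \<inter> {..t})" by (auto intro: bdd_aboveI)
  have "L t \<in> K \<inter> {..t}" unfolding L_def by (rule closed_contains_Sup[OF ne bd cl])
  then show "L t \<in> K" "L t \<le> t" by auto
  fix k assume "k \<in> K" "k \<le> t"
  then show "k \<le> L t" unfolding L_def using bd by (intro cSup_upper) auto
qed

lemma R_props:
  assumes "t \<le> MK"
  shows "R t \<in> K" "t \<le> R t" "\<And>k. k \<in> K \<Longrightarrow> t \<le> k \<Longrightarrow> R t \<le> k"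
proof -
  have ne: "K \<inter> {t..} \<noteq> {}" using MK assms by auto
  have cl: "closed (K \<inter> {t..})" using clK by (intro closed_Int) auto
  have bd: "bdd_below (K \<inter> {t..})" by (auto intro: bdd_belowI)
  have "R t \<in> K \<inter> {t..}" unfolding R_def by (rule closed_contains_Inf[OF ne bd cl])
  then show "R t \<in> K" "t \<le> R t" by auto
  fix k assume "k \<in> K" "t \<le> k"
  then show "R t \<le> k" unfolding R_def using bd by (intro cInf_lower) auto
qed

lemma gap_t:
  assumes "t \<notin> K" "mK < t" "t < MK"
  shows "L t \<in> K" "R t \<in> K" "L t < t" "t < R t" "{L t<..<R t} \<inter> K = {}"
proof -
  show "L t \<in> K" "R t \<in> K" using L_props R_props assms by auto
  then show "L t < t" "t < R t" using L_props(2)[of t] R_props(2)[of t] assms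
    by (metis less_eq_real_def)+
  show "{L t<..<R t} \<inter> K = {}"
  proof (rule ccontr)
    assume "{L t<..<R t} \<inter> K \<noteq> {}"
    then obtain k where k: "k \<in> K" "L t < k" "k < R t" by auto
    show False
    proof (cases "k \<le> t")
      case True then show False using L_props(3)[of t k] k assms by auto
    next
      case False then show False using R_props(3)[of t k] k assms by auto
    qed
  qed
qed

end

context sufs begin

definition kap where "kap a b = (f b - f a) / (b - a) - (D a + D b) / 2"
definition hu where "hu a b t = (t - a) * inverse (b - a)"
definition Hf where "Hf a b t = f a + (b - a) * (D a * (hu a b t - (hu a b t)^2 / 2) + D b * ((hu a b t)^2 / 2)
    + kap a b * (3 * (hu a b t)^2 - 2 * (hu a b t)^3))"
definition Hd where "Hd a b t = D a * (1 - hu a b t) + D b * hu a b t + 6 * kap a b * hu a b t * (1 - hu a b t)"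

lemma poly_deriv:
  "((\<lambda>t. A + l * (p * ((t - a) * c - ((t - a) * c)^2 / 2) + q * (((t - a) * c)^2 / 2)
     + k * (3 * ((t - a) * c)^2 - 2 * ((t - a) * c)^3))) has_real_derivative
     l * c * (p * (1 - (t0 - a) * c) + q * ((t0 - a) * c) + 6 * k * ((t0 - a) * c) * (1 - (t0 - a) * c))) (at t0)"
  by (auto intro!: derivative_eq_intros simp: power2_eq_square power3_eq_cube) (simp add: field_simps)

lemma Hf_deriv: assumes "a < b" shows "(Hf a b has_real_derivative Hd a b t) (at t)"
proof -
  have e: "(b - a) * inverse (b - a) = 1" using assms by simp
  have h1: "Hf a b = (\<lambda>t. f a + (b - a) * (D a * ((t - a) * inverse (b - a) - ((t - a) * inverse (b - a))^2 / 2) + D b * (((t - a) * inverse (b - a))^2 / 2)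
     + kap a b * (3 * ((t - a) * inverse (b - a))^2 - 2 * ((t - a) * inverse (b - a))^3)))"
    by (simp add: Hf_def hu_def fun_eq_iff)
  have h2: "Hd a b t = (b - a) * inverse (b - a) * (D a * (1 - (t - a) * inverse (b - a)) + D b * ((t - a) * inverse (b - a))
     + 6 * kap a b * ((t - a) * inverse (b - a)) * (1 - (t - a) * inverse (b - a)))"
    unfolding e by (simp add: Hd_def hu_def)
  show ?thesis unfolding h1 h2 by (rule poly_deriv)
qed

lemma Hf_a: "Hf a b a = f a" by (simp add: Hf_def hu_def)
lemma Hf_b: "a < b \<Longrightarrow> Hf a b b = f b" by (simp add: Hf_def hu_def kap_def field_simps)
lemma Hd_cont: "a < b \<Longrightarrow> isCont (Hd a b) t" unfolding Hd_def hu_def by (intro continuous_intros) auto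

end

context sufs begin

definition gg where "gg t = (if t \<in> K then f t else if t < mK then f mK + D mK * (t - mK)
   else if MK < t then f MK + D MK * (t - MK) else Hf (L t) (R t) t)"
definition GG where "GG t = (if t \<in> K then D t else if t < mK then D mK
   else if MK < t then D MK else Hd (L t) (R t) t)"

lemma gap_vals:
  assumes "a \<in> K" "b \<in> K" "a < s" "s < b" "{a<..<b} \<inter> K = {}"
  shows "gg s = Hf a b s" "GG s = Hd a b s"
proof -
  have "s \<in> {a<..<b}" using assms(3,4) by simp
  then have sK: "s \<notin> K" using assms(5) by blast
  have "mK \<le> a" using mK(2)[OF assms(1)] .
  have "b \<le> MK" using MK(2)[OF assms(2)] .
  have n1: "\<not> s < mK" using \<open>mK \<le> a\<close> assms(3) by linarith
  have n2: "\<not> MK < s" using \<open>b \<le> MK\<close> assms(4) by linarith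
  have LR: "L s = a" "R s = b" using LR_gap[OF assms(1,2,3,4,5)] by blast+
  show "gg s = Hf a b s" unfolding gg_def using sK n1 n2 LR by simp
  show "GG s = Hd a b s" unfolding GG_def using sK n1 n2 LR by simp
qed

lemma piece:
  assumes "open U" "t \<in> U" "\<And>s. s \<in> U \<Longrightarrow> gg s = \<phi> s \<and> GG s = \<phi>' s"
    "(\<phi> has_real_derivative \<phi>' t) (at t)" "isCont \<phi>' t"
  shows "(gg has_real_derivative GG t) (at t) \<and> isCont GG t"
proof
  have e: "GG t = \<phi>' t" using assms(3)[OF assms(2)] by blast
  have "\<And>s. s \<in> U \<Longrightarrow> \<phi> s = gg s" using assms(3) by metis
  from has_field_derivative_transform_within_open[OF assms(4,1,2) this]
  show "(gg has_real_derivative GG t) (at t)" unfolding e .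
  have "\<forall>s\<in>U. GG s = \<phi>' s" using assms(3) by blast
  then have "eventually (\<lambda>s. GG s = \<phi>' s) (nhds t)" unfolding eventually_nhds using assms(1,2) by blast
  then show "isCont GG t" using isCont_cong assms(5) by blast
qed

lemma off_K:
  assumes "t \<notin> K"
  shows "(gg has_real_derivative GG t) (at t) \<and> isCont GG t"
proof -
  have "t \<noteq> mK" "t \<noteq> MK" using assms mK(1) MK(1) by auto
  then consider "t < mK" | "MK < t" | "mK < t \<and> t < MK" by linarith
  then show ?thesis
  proof cases
    case 1
    show ?thesis
    proof (rule piece[of "{..<mK}" _ "\<lambda>s. f mK + D mK * (s - mK)" "\<lambda>_. D mK"])
      fix s assume s: "s \<in> {..<mK}"
      have "s \<notin> K" using mK(2) s by force
      then show "gg s = f mK + D mK * (s - mK) \<and> GG s = D mK" using s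
        unfolding gg_def GG_def by simp
    next
      show "((\<lambda>s. f mK + D mK * (s - mK)) has_real_derivative D mK) (at t)"
        by (auto intro!: derivative_eq_intros)
    qed (use 1 in simp_all)
  next
    case 2
    show ?thesis
    proof (rule piece[of "{MK<..}" _ "\<lambda>s. f MK + D MK * (s - MK)" "\<lambda>_. D MK"])
      fix s assume s: "s \<in> {MK<..}"
      have "s \<notin> K" using MK(2) s by force
      moreover have "\<not> s < mK" using s mK(1) MK(2)[of mK] by simp
      ultimately show "gg s = f MK + D MK * (s - MK) \<and> GG s = D MK" using s
        unfolding gg_def GG_def by simp
    next
      show "((\<lambda>s. f MK + D MK * (s - MK)) has_real_derivative D MK) (at t)"
        by (auto intro!: derivative_eq_intros)
    qed (use 2 in simp_all)
  next
    case 3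
    note g = gap_t[OF assms 3[THEN conjunct1] 3[THEN conjunct2]]
    show ?thesis
    proof (rule piece[of "{L t<..<R t}" _ "Hf (L t) (R t)" "Hd (L t) (R t)"])
      fix s assume "s \<in> {L t<..<R t}"
      then show "gg s = Hf (L t) (R t) s \<and> GG s = Hd (L t) (R t) s"
        using gap_vals[OF g(1,2) _ _ g(5)] by simp
    next
      show "(Hf (L t) (R t) has_real_derivative Hd (L t) (R t) t) (at t)"
        using g by (intro Hf_deriv) linarith
      show "isCont (Hd (L t) (R t)) t" using g by (intro Hd_cont) linarith
    qed (use g in simp_all)
  qed
qed

end


lemma deriv_pieces:
  fixes g G :: "real \<Rightarrow> real" and K :: "real set"
  assumes cont: "isCont G \<xi>"
   and onK: "\<And>e. e > 0 \<Longrightarrow> \<exists>d>0. \<forall>y\<in>K. \<bar>y - \<xi>\<bar> < d \<longrightarrow> \<bar>g y - g \<xi> - G \<xi> * (y - \<xi>)\<bar> \<le> e * \<bar>y - \<xi>\<bar>"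
   and offK: "\<And>t. t \<notin> K \<Longrightarrow> \<exists>a c. a \<in> K \<and> \<bar>t - a\<bar> + \<bar>a - \<xi>\<bar> = \<bar>t - \<xi>\<bar> \<and> \<bar>c - \<xi>\<bar> \<le> \<bar>t - \<xi>\<bar>
        \<and> g t - g a = G c * (t - a)"
  shows "(g has_real_derivative G \<xi>) (at \<xi>)"
  unfolding has_field_derivative_iff LIM_eq
proof (intro allI impI)
  fix r :: real assume r: "r > 0"
  define e where "e = r / 2"
  have e: "e > 0" "e < r" using r by (auto simp: e_def)
  obtain d1 where d1: "d1 > 0" "\<forall>y\<in>K. \<bar>y - \<xi>\<bar> < d1 \<longrightarrow> \<bar>g y - g \<xi> - G \<xi> * (y - \<xi>)\<bar> \<le> e * \<bar>y - \<xi>\<bar>"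
    using onK[OF e(1)] by blast
  obtain d2 where d2: "d2 > 0" "\<forall>x'. dist x' \<xi> < d2 \<longrightarrow> dist (G x') (G \<xi>) < e"
    using cont e(1) unfolding continuous_at_eps_delta by blast
  show "\<exists>s>0. \<forall>y. y \<noteq> \<xi> \<and> norm (y - \<xi>) < s \<longrightarrow> norm ((g y - g \<xi>) / (y - \<xi>) - G \<xi>) < r"
  proof (intro exI[of _ "min d1 d2"] conjI allI impI)
    show "min d1 d2 > 0" using d1 d2 by simp
    fix y assume y: "y \<noteq> \<xi> \<and> norm (y - \<xi>) < min d1 d2"
    have yd: "\<bar>y - \<xi>\<bar> < d1" "\<bar>y - \<xi>\<bar> < d2" using y by auto
    have key: "\<bar>g y - g \<xi> - G \<xi> * (y - \<xi>)\<bar> \<le> e * \<bar>y - \<xi>\<bar>"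
    proof (cases "y \<in> K")
      case True then show ?thesis using d1(2) yd by blast
    next
      case False
      then obtain a c where ac: "a \<in> K" "\<bar>y - a\<bar> + \<bar>a - \<xi>\<bar> = \<bar>y - \<xi>\<bar>" "\<bar>c - \<xi>\<bar> \<le> \<bar>y - \<xi>\<bar>"
        "g y - g a = G c * (y - a)" using offK by blast
      have "\<bar>a - \<xi>\<bar> < d1" using ac(2) yd(1) by (smt (verit))
      then have A: "\<bar>g a - g \<xi> - G \<xi> * (a - \<xi>)\<bar> \<le> e * \<bar>a - \<xi>\<bar>" using d1(2) ac(1) by blast
      have "dist c \<xi> < d2" using ac(3) yd(2) by (simp add: dist_real_def)
      then have Gc: "\<bar>G c - G \<xi>\<bar> < e" using d2(2) by (simp add: dist_real_def)
      have B: "\<bar>(G c - G \<xi>) * (y - a)\<bar> \<le> e * \<bar>y - a\<bar>"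
        unfolding abs_mult using Gc by (simp add: mult_right_mono)
      have "g y - g \<xi> - G \<xi> * (y - \<xi>) = (G c - G \<xi>) * (y - a) + (g a - g \<xi> - G \<xi> * (a - \<xi>))"
        using ac(4) by (simp add: algebra_simps)
      then have "\<bar>g y - g \<xi> - G \<xi> * (y - \<xi>)\<bar> \<le> e * \<bar>y - a\<bar> + e * \<bar>a - \<xi>\<bar>"
        using A B by linarith
      also have "\<dots> = e * (\<bar>y - a\<bar> + \<bar>a - \<xi>\<bar>)" by (simp add: algebra_simps)
      also have "\<dots> = e * \<bar>y - \<xi>\<bar>" using ac(2) by simp
      finally show ?thesis .
    qed
    have ne: "y - \<xi> \<noteq> 0" using y by simp
    have "(g y - g \<xi>) / (y - \<xi>) - G \<xi> = (g y - g \<xi> - G \<xi> * (y - \<xi>)) / (y - \<xi>)"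
      using ne by (simp add: field_simps)
    then have "norm ((g y - g \<xi>) / (y - \<xi>) - G \<xi>) = \<bar>g y - g \<xi> - G \<xi> * (y - \<xi>)\<bar> / \<bar>y - \<xi>\<bar>"
      by (simp add: abs_divide)
    also have "\<dots> \<le> e" using key ne by (simp add: divide_le_eq)
    finally show "norm ((g y - g \<xi>) / (y - \<xi>) - G \<xi>) < r" using e by linarith
  qed
qed


context sufs begin

lemma gg_K: "x \<in> K \<Longrightarrow> gg x = f x" and GG_K: "x \<in> K \<Longrightarrow> GG x = D x"
  by (simp_all add: gg_def GG_def)

lemma onK_gg:
  assumes "\<xi> \<in> K" "e > 0"
  shows "\<exists>d>0. \<forall>y\<in>K. \<bar>y - \<xi>\<bar> < d \<longrightarrow> \<bar>gg y - gg \<xi> - GG \<xi> * (y - \<xi>)\<bar> \<le> e * \<bar>y - \<xi>\<bar>"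
  using lim_eps[OF assms] assms(1) by (simp add: gg_K GG_K)

lemma offK_gg:
  assumes xi: "\<xi> \<in> K" and t: "t \<notin> K"
  shows "\<exists>a c. a \<in> K \<and> \<bar>t - a\<bar> + \<bar>a - \<xi>\<bar> = \<bar>t - \<xi>\<bar> \<and> \<bar>c - \<xi>\<bar> \<le> \<bar>t - \<xi>\<bar>
        \<and> gg t - gg a = GG c * (t - a)"
proof -
  have "t \<noteq> mK" "t \<noteq> MK" using t mK(1) MK(1) by auto
  have xim: "mK \<le> \<xi>" "\<xi> \<le> MK" using mK(2) MK(2) xi by auto
  consider "t < mK" | "MK < t" | "mK < t \<and> t < MK" using \<open>t \<noteq> mK\<close> \<open>t \<noteq> MK\<close> by linarith
  then show ?thesis
  proof cases
    case 1
    define c where "c = (t + mK) / 2"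
    have c: "c < mK" "t < c" using 1 by (auto simp: c_def)
    have cK: "c \<notin> K" using mK(2) c(1) by force
    have "gg t = f mK + D mK * (t - mK)" using t 1 by (simp add: gg_def)
    moreover have "gg mK = f mK" using mK(1) by (simp add: gg_K)
    moreover have "GG c = D mK" using cK c by (simp add: GG_def)
    ultimately have "gg t - gg mK = GG c * (t - mK)" by simp
    moreover have "\<bar>t - mK\<bar> + \<bar>mK - \<xi>\<bar> = \<bar>t - \<xi>\<bar>" "\<bar>c - \<xi>\<bar> \<le> \<bar>t - \<xi>\<bar>" using 1 xim c by auto
    ultimately show ?thesis using mK(1) by blast
  next
    case 2
    define c where "c = (t + MK) / 2"
    have c: "MK < c" "c < t" using 2 by (auto simp: c_def)
    have cK: "c \<notin> K" using MK(2) c(1) by force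
    have nm: "\<not> c < mK" "\<not> t < mK" using c 2 xim by auto
    have "gg t = f MK + D MK * (t - MK)" using t 2 nm by (simp add: gg_def)
    moreover have "gg MK = f MK" using MK(1) by (simp add: gg_K)
    moreover have "GG c = D MK" using cK c nm by (simp add: GG_def)
    ultimately have "gg t - gg MK = GG c * (t - MK)" by simp
    moreover have "\<bar>t - MK\<bar> + \<bar>MK - \<xi>\<bar> = \<bar>t - \<xi>\<bar>" "\<bar>c - \<xi>\<bar> \<le> \<bar>t - \<xi>\<bar>" using 2 xim c by auto
    ultimately show ?thesis using MK(1) by blast
  next
    case 3
    note g = gap_t[OF t 3[THEN conjunct1] 3[THEN conjunct2]]
    define a0 where "a0 = L t"
    define b0 where "b0 = R t"
    have g': "a0 \<in> K" "b0 \<in> K" "a0 < t" "t < b0" "{a0<..<b0} \<inter> K = {}" using g by (auto simp: a0_def b0_def)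
    have ab: "a0 < b0" using g' by linarith
    have der: "\<And>x. (Hf a0 b0 has_real_derivative Hd a0 b0 x) (at x)" using Hf_deriv[OF ab] .
    have ggt: "gg t = Hf a0 b0 t" using gap_vals[OF g'(1,2,3,4,5)] by blast
    have "t \<noteq> \<xi>" using t xi by auto
    then consider "\<xi> < t" | "t < \<xi>" by linarith
    then show ?thesis
    proof cases
      case 1
      have "\<xi> \<le> a0" unfolding a0_def using L_props(3)[of t \<xi>] 1 3 xi by auto
      obtain z where z: "a0 < z" "z < t" "Hf a0 b0 t - Hf a0 b0 a0 = (t - a0) * Hd a0 b0 z"
        using MVT2[OF g'(3), of "Hf a0 b0" "Hd a0 b0"] der by blast
      have "GG z = Hd a0 b0 z" using gap_vals[OF g'(1,2) z(1) _ g'(5)] z(2) g'(4) by simp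
      then have "gg t - gg a0 = GG z * (t - a0)" using z(3) ggt gg_K[OF g'(1)] Hf_a[of a0 b0] by simp
      moreover have "\<bar>t - a0\<bar> + \<bar>a0 - \<xi>\<bar> = \<bar>t - \<xi>\<bar>" "\<bar>z - \<xi>\<bar> \<le> \<bar>t - \<xi>\<bar>"
        using \<open>\<xi> \<le> a0\<close> z g' by auto
      ultimately show ?thesis using g'(1) by blast
    next
      case 2
      have "b0 \<le> \<xi>" unfolding b0_def using R_props(3)[of t \<xi>] 2 3 xi by auto
      obtain z where z: "t < z" "z < b0" "Hf a0 b0 b0 - Hf a0 b0 t = (b0 - t) * Hd a0 b0 z"
        using MVT2[OF g'(4), of "Hf a0 b0" "Hd a0 b0"] der by blast
      have "GG z = Hd a0 b0 z" using gap_vals[OF g'(1,2) _ z(2) g'(5)] z(1) g'(3) by simp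
      then have "gg t - gg b0 = GG z * (t - b0)" using z(3) ggt gg_K[OF g'(2)] Hf_b[OF ab]
        by (simp add: algebra_simps)
      moreover have "\<bar>t - b0\<bar> + \<bar>b0 - \<xi>\<bar> = \<bar>t - \<xi>\<bar>" "\<bar>z - \<xi>\<bar> \<le> \<bar>t - \<xi>\<bar>"
        using \<open>b0 \<le> \<xi>\<close> z g' by auto
      ultimately show ?thesis using g'(2) by blast
    qed
  qed
qed

end


lemma alg_close:
  fixes p q s X u e :: real
  assumes "0 \<le> u" "u \<le> 1" "\<bar>p - X\<bar> \<le> e" "\<bar>q - X\<bar> \<le> e" "\<bar>s - X\<bar> \<le> 2*e"
  shows "\<bar>p*(1-u) + q*u + 6*(s - (p+q)/2)*u*(1-u) - X\<bar> \<le> 6*e"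
proof -
  define w where "w = 6*u*(1-u)"
  define k where "k = (s - X) - ((p - X) + (q - X))/2"
  have w0: "0 \<le> w" unfolding w_def using assms(1,2) by simp
  have "w = 3/2 - (3/2)*(2*u-1)^2" unfolding w_def by (simp add: power2_eq_square algebra_simps)
  moreover have "0 \<le> (2*u-1)^2" by simp
  ultimately have w1: "w \<le> 3/2" by linarith
  have e0: "0 \<le> e" using assms(3) by linarith
  have k: "\<bar>k\<bar> \<le> 3*e" unfolding k_def using assms(3,4,5) by (auto simp: abs_le_iff field_simps)
  have eq: "p*(1-u) + q*u + 6*(s - (p+q)/2)*u*(1-u) - X = (p - X)*(1-u) + (q - X)*u + w*k"
    unfolding w_def k_def by (simp add: field_simps)
  have A: "\<bar>p - X\<bar>*\<bar>1-u\<bar> \<le> e*\<bar>1-u\<bar>" using assms by (intro mult_right_mono) auto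
  have B: "\<bar>q - X\<bar>*\<bar>u\<bar> \<le> e*\<bar>u\<bar>" using assms by (intro mult_right_mono) auto
  have C: "\<bar>w\<bar>*\<bar>k\<bar> \<le> 3/2 * (3*e)" using w0 w1 k e0 by (intro mult_mono) auto
  have "\<bar>1-u\<bar> = 1-u" "\<bar>u\<bar> = u" using assms(1,2) by auto
  moreover have "e*(1-u) + e*u = e" by (simp add: algebra_simps)
  moreover have "\<bar>(p - X)*(1-u) + (q - X)*u + w*k\<bar> \<le> \<bar>(p - X)*(1-u) + (q - X)*u\<bar> + \<bar>w*k\<bar>"
    by (rule abs_triangle_ineq)
  moreover have "\<bar>(p - X)*(1-u) + (q - X)*u\<bar> \<le> \<bar>(p - X)*(1-u)\<bar> + \<bar>(q - X)*u\<bar>"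
    by (rule abs_triangle_ineq)
  ultimately show ?thesis unfolding eq using A B C e0 abs_mult[of "p-X" "1-u"] abs_mult[of "q-X" u] abs_mult[of w k]
    by linarith
qed

lemma alg_far:
  fixes p q k X u e Q0 K0 :: real
  assumes "0 \<le> u" "u \<le> 1" "\<bar>p - X\<bar> \<le> e" "\<bar>q - X\<bar> \<le> Q0" "\<bar>k\<bar> \<le> K0"
  shows "\<bar>p*(1-u) + q*u + 6*k*u*(1-u) - X\<bar> \<le> e + u*(Q0 + 6*K0)"
proof -
  have eq: "p*(1-u) + q*u + 6*k*u*(1-u) - X = (p - X)*(1-u) + (q - X)*u + (6*k*(1-u))*u"
    by (simp add: algebra_simps)
  have u1: "\<bar>1-u\<bar> = 1-u" "\<bar>u\<bar> = u" "1 - u \<le> 1" using assms(1,2) by auto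
  have e0: "0 \<le> e" "0 \<le> K0" using assms(3,5) by linarith+
  have A: "\<bar>p - X\<bar>*\<bar>1-u\<bar> \<le> e * 1" using assms u1 e0 by (intro mult_mono) auto
  have B: "\<bar>q - X\<bar>*\<bar>u\<bar> \<le> Q0*u" using assms u1 by (intro mult_mono) auto
  have "\<bar>k\<bar>*\<bar>1-u\<bar> \<le> K0 * 1" using assms u1 e0 by (intro mult_mono) auto
  then have "\<bar>6*k*(1-u)\<bar> \<le> 6*K0" by (simp add: abs_mult)
  then have C: "\<bar>6*k*(1-u)\<bar>*\<bar>u\<bar> \<le> (6*K0)*u" using assms u1 by (intro mult_mono) auto
  have "\<bar>(p - X)*(1-u) + (q - X)*u + (6*k*(1-u))*u\<bar> \<le> \<bar>(p - X)*(1-u) + (q - X)*u\<bar> + \<bar>(6*k*(1-u))*u\<bar>"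
    by (rule abs_triangle_ineq)
  moreover have "\<bar>(p - X)*(1-u) + (q - X)*u\<bar> \<le> \<bar>(p - X)*(1-u)\<bar> + \<bar>(q - X)*u\<bar>"
    by (rule abs_triangle_ineq)
  ultimately have "\<bar>(p - X)*(1-u) + (q - X)*u + (6*k*(1-u))*u\<bar> \<le> e + Q0*u + (6*K0)*u"
    using A B C abs_mult[of "p-X" "1-u"] abs_mult[of "q-X" u] abs_mult[of "6*k*(1-u)" u] by linarith
  then show ?thesis unfolding eq by (simp add: algebra_simps)
qed


context sufs begin

lemma hu_bounds: fixes a b c :: real assumes "a < c" "c < b" shows "0 \<le> hu a b c" "hu a b c \<le> 1"
proof -
  have e: "hu a b c = (c - a) / (b - a)" unfolding hu_def by (rule divide_inverse[symmetric])
  show "0 \<le> hu a b c" unfolding e using assms by simp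
  show "hu a b c \<le> 1" unfolding e using assms by (simp add: divide_le_eq_1)
qed

lemma Hd_close:
  assumes "a < c" "c < b" "\<bar>D a - X\<bar> \<le> e" "\<bar>D b - X\<bar> \<le> e" "\<bar>(f b - f a) - X*(b-a)\<bar> \<le> 2*e*(b-a)"
  shows "\<bar>Hd a b c - X\<bar> \<le> 6*e"
proof -
  have ba: "b - a > 0" using assms by simp
  define s where "s = (f b - f a) / (b - a)"
  have "s - X = ((f b - f a) - X*(b-a)) / (b - a)" unfolding s_def using ba by (simp add: field_simps)
  then have "\<bar>s - X\<bar> = \<bar>(f b - f a) - X*(b-a)\<bar> / (b - a)" using ba by (simp add: abs_divide)
  also have "\<dots> \<le> 2*e" using assms(5) ba by (simp add: divide_le_eq)
  finally have sX: "\<bar>s - X\<bar> \<le> 2*e" .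
  have "Hd a b c = D a * (1 - hu a b c) + D b * hu a b c + 6 * (s - (D a + D b)/2) * hu a b c * (1 - hu a b c)"
    unfolding Hd_def kap_def s_def by simp
  then show ?thesis using alg_close[OF hu_bounds[OF assms(1,2)] assms(3,4) sX] by simp
qed

lemma Hd_far_left:
  assumes "a < c" "c < b" "\<bar>D a - X\<bar> \<le> e" "\<bar>D b - X\<bar> \<le> Q0" "\<bar>kap a b\<bar> \<le> K0"
  shows "\<bar>Hd a b c - X\<bar> \<le> e + hu a b c * (Q0 + 6*K0)"
  unfolding Hd_def using alg_far[OF hu_bounds[OF assms(1,2)] assms(3,4,5)] by (simp add: mult.assoc)

lemma Hd_far_right:
  assumes "a < c" "c < b" "\<bar>D b - X\<bar> \<le> e" "\<bar>D a - X\<bar> \<le> Q0" "\<bar>kap a b\<bar> \<le> K0"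
  shows "\<bar>Hd a b c - X\<bar> \<le> e + (1 - hu a b c) * (Q0 + 6*K0)"
proof -
  have u: "0 \<le> 1 - hu a b c" "1 - hu a b c \<le> 1" using hu_bounds[OF assms(1,2)] by auto
  have "Hd a b c = D b * (1 - (1 - hu a b c)) + D a * (1 - hu a b c) + 6 * kap a b * (1 - hu a b c) * (1 - (1 - hu a b c))"
    unfolding Hd_def by (simp add: algebra_simps)
  then show ?thesis using alg_far[OF u assms(3,4,5)] by simp
qed

end

context sufs begin

lemma kap_bound:
  assumes "a < b" "a \<in> K" "b \<in> K" "\<eta> > 0" "\<eta>/2 \<le> b - a" "\<And>k. k \<in> K \<Longrightarrow> \<bar>D k\<bar> \<le> B \<and> \<bar>f k\<bar> \<le> B"
  shows "\<bar>kap a b\<bar> \<le> 4*B/\<eta> + B"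
proof -
  have fa: "\<bar>f a\<bar> \<le> B" "\<bar>D a\<bar> \<le> B" and fb: "\<bar>f b\<bar> \<le> B" "\<bar>D b\<bar> \<le> B" using assms(2,3,6) by auto
  have B0: "0 \<le> B" using fa by linarith
  have "\<bar>f b - f a\<bar> \<le> 2*B" using fa fb by linarith
  then have "\<bar>(f b - f a)/(b - a)\<bar> \<le> (2*B)/(\<eta>/2)"
    unfolding abs_divide using assms(1,4,5) B0 by (intro frac_le) auto
  also have "\<dots> = 4*B/\<eta>" by simp
  finally have s: "\<bar>(f b - f a)/(b - a)\<bar> \<le> 4*B/\<eta>" .
  have "\<bar>D a + D b\<bar> \<le> \<bar>D a\<bar> + \<bar>D b\<bar>" by (rule abs_triangle_ineq)
  then have "\<bar>(D a + D b)/2\<bar> \<le> B" using fa fb by simp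
  then show ?thesis unfolding kap_def using s by linarith
qed

lemma GG_cont_K:
  assumes xi: "\<xi> \<in> K"
  shows "isCont GG \<xi>"
  unfolding continuous_at_eps_delta
proof (intro allI impI)
  fix \<epsilon> :: real assume \<epsilon>: "\<epsilon> > 0"
  define e1 where "e1 = \<epsilon>/8"
  have e1: "e1 > 0" "6*e1 < \<epsilon>" "e1 < \<epsilon>" using \<epsilon> by (auto simp: e1_def)
  obtain e0 C where e0: "e0 > 0" "C > 0" and sb: "\<forall>a b. a < b \<and> a \<in> K \<and> b \<in> K \<and> {a<..<b} \<inter> K = {} \<and> \<xi> - e0 \<le> a \<and> b \<le> \<xi> + e0
     \<longrightarrow> max \<bar>a - \<xi>\<bar> \<bar>b - \<xi>\<bar> \<le> C * (b - a)"
    using sigma_fin_bound[OF sfin[OF xi] xi] by blast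
  obtain B where B: "B > 0" "\<And>k. k \<in> K \<Longrightarrow> \<bar>D k\<bar> \<le> B \<and> \<bar>f k\<bar> \<le> B" using bounds by blast
  obtain d1 where d1: "d1 > 0" "\<forall>k\<in>K. dist k \<xi> < d1 \<longrightarrow> dist (D k) (D \<xi>) < e1"
    using cD xi e1(1) unfolding continuous_on_iff by blast
  have "e1 / C > 0" using e1 e0 by simp
  then obtain d2 where d2: "d2 > 0" "\<forall>y\<in>K. \<bar>y - \<xi>\<bar> < d2 \<longrightarrow> \<bar>f y - f \<xi> - D \<xi> * (y - \<xi>)\<bar> \<le> (e1/C) * \<bar>y - \<xi>\<bar>"
    using lim_eps[OF xi] by blast
  define \<eta> where "\<eta> = min (min d1 d2) e0"
  have \<eta>: "\<eta> > 0" "\<eta> \<le> d1" "\<eta> \<le> d2" "\<eta> \<le> e0" using d1 d2 e0 by (auto simp: \<eta>_def)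
  define W0 where "W0 = 2*B + 6*(4*B/\<eta> + B)"
  have "0 \<le> 4*B/\<eta>" using B(1) \<eta>(1) by simp
  then have W0: "W0 > 0" unfolding W0_def using B(1) by (intro add_pos_nonneg) auto
  define \<delta> where "\<delta> = min (\<eta>/2) (\<eta>*\<epsilon>/(4*W0+1))"
  have "\<eta>*\<epsilon>/(4*W0+1) > 0" using \<eta> \<epsilon> W0 by simp
  then have \<delta>1: "\<delta> > 0" using \<eta>(1) unfolding \<delta>_def by simp
  have \<delta>2: "\<delta> \<le> \<eta>/2" unfolding \<delta>_def by (rule min.cobounded1)
  have \<delta>3: "\<delta> \<le> \<eta>*\<epsilon>/(4*W0+1)" unfolding \<delta>_def by (rule min.cobounded2)
  note \<delta> = \<delta>1 \<delta>2 \<delta>3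
  have uW: "u * W0 < \<epsilon>/2" if u0: "0 \<le> u" and uh: "u * (\<eta>/2) \<le> \<delta>" for u
  proof -
    have p: "4*W0+1 > 0" using W0 by simp
    have "u * (\<eta>/2) \<le> \<eta>*\<epsilon>/(4*W0+1)" using uh \<delta>(3) by linarith
    then have "u * (\<eta>/2) * (4*W0+1) \<le> \<eta>*\<epsilon>" using p by (simp add: le_divide_eq)
    then have "(\<eta>/2) * (u * (4*W0+1)) \<le> (\<eta>/2) * (2*\<epsilon>)" by (simp add: algebra_simps)
    then have "u * (4*W0+1) \<le> 2*\<epsilon>" using \<eta>(1) by (simp add: mult_le_cancel_left_pos)
    then have q: "4*(u*W0) + u \<le> 2*\<epsilon>" by (simp add: algebra_simps)
    show ?thesis
    proof (cases "u = 0")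
      case True then show ?thesis using \<epsilon> by simp
    next
      case False then show ?thesis using q u0 by linarith
    qed
  qed
  have Dc: "\<bar>D k - D \<xi>\<bar> < e1" if "k \<in> K" "\<bar>k - \<xi>\<bar> < \<eta>" for k
    using d1(2) that \<eta>(2) by (simp add: dist_real_def)
  have fc: "\<bar>f k - f \<xi> - D \<xi> * (k - \<xi>)\<bar> \<le> (e1/C) * \<bar>k - \<xi>\<bar>" if "k \<in> K" "\<bar>k - \<xi>\<bar> < \<eta>" for k
    using d2(2) that \<eta>(3) by simp
  show "\<exists>d>0. \<forall>x'. dist x' \<xi> < d \<longrightarrow> dist (GG x') (GG \<xi>) < \<epsilon>"
  proof (intro exI[of _ \<delta>] conjI allI impI \<delta>(1))
    fix c assume "dist c \<xi> < \<delta>"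
    then have c: "\<bar>c - \<xi>\<bar> < \<delta>" by (simp add: dist_real_def)
    have GGxi: "GG \<xi> = D \<xi>" using xi by (simp add: GG_K)
    have "\<bar>GG c - D \<xi>\<bar> < \<epsilon>"
    proof (cases "c \<in> K")
      case True
      then show ?thesis using Dc[of c] c \<delta>(2) \<eta>(1) e1 by (simp add: GG_K)
    next
      case cK: False
      have "c \<noteq> mK" "c \<noteq> MK" using cK mK(1) MK(1) by auto
      have xim: "mK \<le> \<xi>" "\<xi> \<le> MK" using mK(2) MK(2) xi by auto
      consider "c < mK" | "MK < c" | "mK < c \<and> c < MK" using \<open>c \<noteq> mK\<close> \<open>c \<noteq> MK\<close> by linarith
      then show ?thesis
      proof cases
        case 1
        have "GG c = D mK" using cK 1 by (simp add: GG_def)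
        moreover have "\<bar>mK - \<xi>\<bar> < \<eta>" using 1 xim c \<delta>(2) \<eta>(1) by auto
        ultimately show ?thesis using Dc[OF mK(1)] e1 by simp
      next
        case 2
        have "GG c = D MK" using cK 2 xim by (simp add: GG_def)
        moreover have "\<bar>MK - \<xi>\<bar> < \<eta>" using 2 xim c \<delta>(2) \<eta>(1) by auto
        ultimately show ?thesis using Dc[OF MK(1)] e1 by simp
      next
        case 3
        note g = gap_t[OF cK 3[THEN conjunct1] 3[THEN conjunct2]]
        define a where "a = L c"
        define b where "b = R c"
        have g': "a \<in> K" "b \<in> K" "a < c" "c < b" "{a<..<b} \<inter> K = {}" using g by (auto simp: a_def b_def)
        have ab: "a < b" using g' by linarith
        have GGc: "GG c = Hd a b c" using gap_vals[OF g'(1,2,3,4,5)] by blast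
        have "\<xi> \<notin> {a<..<b}" using g'(5) xi by blast
        then have side: "\<xi> \<le> a \<or> b \<le> \<xi>" by auto
        have hu_eq: "hu a b c = (c - a)/(b - a)" unfolding hu_def by (simp add: divide_inverse)
        show ?thesis
        proof (cases "\<bar>a - \<xi>\<bar> < \<eta> \<and> \<bar>b - \<xi>\<bar> < \<eta>")
          case True
          have Da: "\<bar>D a - D \<xi>\<bar> \<le> e1" using Dc[OF g'(1)] True by simp
          have Db: "\<bar>D b - D \<xi>\<bar> \<le> e1" using Dc[OF g'(2)] True by simp
          have "max \<bar>a - \<xi>\<bar> \<bar>b - \<xi>\<bar> \<le> C * (b - a)"
            using sb ab g' True \<eta>(4) by (simp add: abs_less_iff)
          then have sum2: "\<bar>b - \<xi>\<bar> + \<bar>a - \<xi>\<bar> \<le> 2 * C * (b - a)" by simp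
          have fa: "\<bar>f a - f \<xi> - D \<xi> * (a - \<xi>)\<bar> \<le> (e1/C) * \<bar>a - \<xi>\<bar>" using fc[OF g'(1)] True by simp
          have fb: "\<bar>f b - f \<xi> - D \<xi> * (b - \<xi>)\<bar> \<le> (e1/C) * \<bar>b - \<xi>\<bar>" using fc[OF g'(2)] True by simp
          have eq: "(f b - f a) - D \<xi> * (b - a) = (f b - f \<xi> - D \<xi> * (b - \<xi>)) - (f a - f \<xi> - D \<xi> * (a - \<xi>))"
            by (simp add: algebra_simps)
          have "\<bar>(f b - f a) - D \<xi> * (b - a)\<bar> \<le> (e1/C) * \<bar>b - \<xi>\<bar> + (e1/C) * \<bar>a - \<xi>\<bar>"
            unfolding eq using fa fb by linarith
          also have "\<dots> = (e1/C) * (\<bar>b - \<xi>\<bar> + \<bar>a - \<xi>\<bar>)" by (simp add: algebra_simps)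
          also have "\<dots> \<le> (e1/C) * (2 * C * (b - a))" using sum2 e1 e0 by (intro mult_left_mono) auto
          also have "\<dots> = 2 * e1 * (b - a)" using e0 by (simp add: field_simps)
          finally have "\<bar>(f b - f a) - D \<xi> * (b - a)\<bar> \<le> 2 * e1 * (b - a)" .
          then have "\<bar>Hd a b c - D \<xi>\<bar> \<le> 6 * e1" using Hd_close[OF g'(3,4) Da Db] by blast
          then show ?thesis using GGc e1 by simp
        next
          case False
          from side show ?thesis
          proof
            assume left: "\<xi> \<le> a"
            have "\<bar>a - \<xi>\<bar> < \<eta>" using left g'(3) c \<delta>(2) \<eta>(1) by auto
            then have "\<eta> \<le> b - \<xi>" using False left ab by auto
            then have len: "\<eta>/2 \<le> b - a" using left g'(3) c \<delta>(2) by auto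
            have Da: "\<bar>D a - D \<xi>\<bar> \<le> e1" using Dc[OF g'(1) \<open>\<bar>a - \<xi>\<bar> < \<eta>\<close>] by simp
            have Db: "\<bar>D b - D \<xi>\<bar> \<le> 2*B" using B(2)[OF g'(2)] B(2)[OF xi] by linarith
            have kb: "\<bar>kap a b\<bar> \<le> 4*B/\<eta> + B" using kap_bound[OF ab g'(1,2) \<eta>(1) len B(2)] by blast
            have h0: "0 \<le> hu a b c" using hu_bounds[OF g'(3,4)] by blast
            have "hu a b c * (b - a) = c - a" unfolding hu_eq using ab by simp
            moreover have "hu a b c * (\<eta>/2) \<le> hu a b c * (b - a)" using len h0 by (rule mult_left_mono)
            ultimately have hb: "hu a b c * (\<eta>/2) \<le> \<delta>" using left c by linarith
            have "\<bar>Hd a b c - D \<xi>\<bar> \<le> e1 + hu a b c * W0"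
              using Hd_far_left[OF g'(3,4) Da Db kb] unfolding W0_def by simp
            then show ?thesis using uW[OF h0 hb] GGc e1 by simp
          next
            assume right: "b \<le> \<xi>"
            have "\<bar>b - \<xi>\<bar> < \<eta>" using right g'(4) c \<delta>(2) \<eta>(1) by auto
            then have "\<eta> \<le> \<xi> - a" using False right ab by auto
            then have len: "\<eta>/2 \<le> b - a" using right g'(4) c \<delta>(2) by auto
            have Db: "\<bar>D b - D \<xi>\<bar> \<le> e1" using Dc[OF g'(2) \<open>\<bar>b - \<xi>\<bar> < \<eta>\<close>] by simp
            have Da: "\<bar>D a - D \<xi>\<bar> \<le> 2*B" using B(2)[OF g'(1)] B(2)[OF xi] by linarith
            have kb: "\<bar>kap a b\<bar> \<le> 4*B/\<eta> + B" using kap_bound[OF ab g'(1,2) \<eta>(1) len B(2)] by blast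
            have "1 - hu a b c = (b - c)/(b - a)" unfolding hu_eq using ab by (simp add: field_simps)
            then have "(1 - hu a b c) * (b - a) = b - c" using ab by simp
            have h0: "0 \<le> 1 - hu a b c" using hu_bounds[OF g'(3,4)] by simp
            have "(1 - hu a b c) * (\<eta>/2) \<le> (1 - hu a b c) * (b - a)" using len h0 by (rule mult_left_mono)
            then have hb: "(1 - hu a b c) * (\<eta>/2) \<le> \<delta>" using right c \<open>(1 - hu a b c) * (b - a) = b - c\<close> by linarith
            have "\<bar>Hd a b c - D \<xi>\<bar> \<le> e1 + (1 - hu a b c) * W0"
              using Hd_far_right[OF g'(3,4) Db Da kb] unfolding W0_def by simp
            then show ?thesis using uW[OF h0 hb] GGc e1 by simp
          qed
        qed
      qed
    qed
    then show "dist (GG c) (GG \<xi>) < \<epsilon>" using GGxi by (simp add: dist_real_def)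
  qed
qed

end

context sufs begin

lemma GG_cont: "isCont GG x"
  using GG_cont_K off_K by (cases "x \<in> K") auto

lemma gg_deriv: "(gg has_real_derivative GG x) (at x)"
proof (cases "x \<in> K")
  case True
  show ?thesis
    by (rule deriv_pieces[OF GG_cont onK_gg[OF True] offK_gg[OF True]]) auto
next
  case False then show ?thesis using off_K by blast
qed

lemma extension: "gg \<in> C1_real" "\<forall>x\<in>K. f x = gg x"
proof -
  show "gg \<in> C1_real" unfolding C1_real_def
    using gg_deriv GG_cont by (auto intro!: continuous_at_imp_continuous_on)
  show "\<forall>x\<in>K. f x = gg x" by (simp add: gg_K)
qed

end

lemma restr_sub_on: "C1_restr K \<subseteq> C1_on K"
proof
  fix f assume "f \<in> C1_restr K"
  then obtain g g' where g: "\<And>x. (g has_real_derivative g' x) (at x)" "continuous_on UNIV g'"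
    "\<And>x. x \<in> K \<Longrightarrow> f x = g x"
    unfolding C1_restr_def C1_real_def by blast
  show "f \<in> C1_on K" unfolding C1_on_def
  proof (intro CollectI exI[of _ g'] conjI ballI)
    show "continuous_on K g'" using g(2) by (rule continuous_on_subset) simp
    fix x assume x: "x \<in> K"
    have "(g has_derivative (\<lambda>h. g' x * h)) (at x within K)"
      using g(1)[of x] unfolding has_field_derivative_def by (rule has_derivative_at_withinI)
    then have "((\<lambda>y. (1 / norm (y - x)) *\<^sub>R (g y - (g x + g' x * (y - x)))) \<longlongrightarrow> 0) (at x within K)"
      unfolding has_derivative_within by blast
    then have t: "((\<lambda>y. (g y - g x - g' x * (y - x)) / \<bar>y - x\<bar>) \<longlongrightarrow> 0) (at x within K)"
      by (simp add: algebra_simps divide_inverse)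
    show "((\<lambda>y. (f y - f x - g' x * (y - x)) / \<bar>y - x\<bar>) \<longlongrightarrow> 0) (at x within K)"
    proof (rule Lim_transform_within[OF t zero_less_one])
      fix y assume "y \<in> K" "0 < dist y x" "dist y x < 1"
      then show "(g y - g x - g' x * (y - x)) / \<bar>y - x\<bar> = (f y - f x - g' x * (y - x)) / \<bar>y - x\<bar>"
        using g(3) x by simp
    qed
  qed
qed

lemma sufficiency:
  fixes K :: "real set"
  assumes "compact K" "\<forall>\<xi>\<in>K. sigma K \<xi> < \<infinity>"
  shows "C1_on K \<subseteq> C1_restr K"
proof
  fix f assume "f \<in> C1_on K"
  then obtain D where D: "continuous_on K D"
    "\<And>x. x \<in> K \<Longrightarrow> ((\<lambda>y. (f y - f x - D x * (y - x)) / \<bar>y - x\<bar>) \<longlongrightarrow> 0) (at x within K)"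
    unfolding C1_on_def by blast
  show "f \<in> C1_restr K"
  proof (cases "K = {}")
    case True
    have "(\<lambda>_. 0::real) \<in> C1_real" unfolding C1_real_def
      by (intro CollectI exI[of _ "\<lambda>_. 0"] conjI allI) (auto intro: derivative_eq_intros)
    then show ?thesis unfolding C1_restr_def using True by blast
  next
    case False
    interpret sufs K f D using assms False D by unfold_locales auto
    show ?thesis unfolding C1_restr_def using extension by blast
  qed
qed

theorem mainTheorem17:
  fixes K :: "real set"
  assumes "compact K"
  shows "C1_on K = C1_restr K \<longleftrightarrow> (\<forall>\<xi>\<in>K. sigma K \<xi> < \<infinity>)"
proof
  assume eq: "C1_on K = C1_restr K"
  show "\<forall>\<xi>\<in>K. sigma K \<xi> < \<infinity>"
  proof
    fix \<xi> assume xi: "\<xi> \<in> K"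
    show "sigma K \<xi> < \<infinity>"
    proof (rule ccontr)
      assume "\<not> sigma K \<xi> < \<infinity>"
      then have "sigma K \<xi> = \<infinity>" by (simp add: top.not_eq_extremum)
      then show False using necessity[OF assms xi] eq by blast
    qed
  qed
next
  assume "\<forall>\<xi>\<in>K. sigma K \<xi> < \<infinity>"
  then show "C1_on K = C1_restr K" using sufficiency[OF assms] restr_sub_on by blast
qed


end
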